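(* Let $\mathcal{F}_s$ be as below and let $E_s$ be the number of forms $f\in\mathcal{F}_s$ such that $-3D(f)$ is imaginary or unusual with $\mathrm{sgn}(-3D(f))\in\{1,h\}$, the Hessian $H_f=(P,Q,R)$ is partially reduced, and $\deg(P)=\deg(R)$. Then $E_s\le\frac{q+1}{2}q^s$ if $s\equiv0\pmod 4$, and $E_s=0$ if $s\not\equiv0\pmod4$.
   Context: $q$ is a prime power with $\gcd(q,6)=1$; for nonzero $H\in\mathbb{F}_q[t]$, $|H|=q^{\deg H}$, $\mathrm{sgn}(H)$ = leading coefficient, $|0|=0$. A binary cubic form $(a,b,c,d)$ is $ax^3+bx^2y+cxy^2+dy^3$ over $\mathbb{F}_q[t]$, irreducible, with discriminant $D(f)=18abcd+b^2c^2-4ac^3-4b^3d-27a^2d^2$ and Hessian $(P,Q,R)$, $P=b^2-3ac$, $Q=bc-9ad$, $R=c^2-3bd$ (a binary quadratic form $Px^2+Qxy+Ry^2$ of discriminant $-3D(f)$). $\Delta$ is imaginary if $\deg\Delta$ odd and unusual if $\deg\Delta$ even and $\mathrm{sgn}(\Delta)$ a non-square in $\mathbb{F}_q^*$. Fix a primitive root $h$ of $\mathbb{F}_q^*$, $S=\{h^i:0\le i\le(q-3)/2\}$. A binary quadratic form $(A,B,C)$ is partially reduced if $|B|<|A|\le|C|$; if $|A|<|C|$ then $\mathrm{sgn}(A)\in\{1,h\}$, if $|A|=|C|$ then $\mathrm{sgn}(A)=1$; and $B\ne0$ implies $\mathrm{sgn}(B)\in S$. $\mathcal{F}_s$ is the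 set of binary cubic forms $f=(a,b,c,d)$ with $\deg D(f)=s$, $\deg a\le s/4$, $\deg b\le s/4$, $\deg(ad)\le s/2$, $\deg(bc)\le s/2$, and $\mathrm{sgn}(a)\in S$. *)

theory Defs
  imports "HOL-Computational_Algebra.Polynomial" "HOL-Computational_Algebra.Polynomial_Factorial" "HOL-Library.Cardinality"
begin

type_synonym 'a bcf = "'a poly \<times> 'a poly \<times> 'a poly \<times> 'a poly"

definition pabs :: "'a::{field,finite} poly \<Rightarrow> nat" where
  "pabs H = (if H = 0 then 0 else CARD('a) ^ degree H)"

definition psgn :: "'a::field poly \<Rightarrow> 'a" where
  "psgn H = lead_coeff H"

definition disc :: "'a::comm_ring_1 \<times> 'a \<times> 'a \<times> 'a \<Rightarrow> 'a" where
  "disc f = (case f of (a,b,c,d) \<Rightarrow>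
     18*a*b*c*d + b^2*c^2 - 4*a*c^3 - 4*b^3*d - 27*a^2*d^2)"

definition hessian :: "'a::comm_ring_1 \<times> 'a \<times> 'a \<times> 'a \<Rightarrow> 'a \<times> 'a \<times> 'a" where
  "hessian f = (case f of (a,b,c,d) \<Rightarrow> (b^2 - 3*a*c, b*c - 9*a*d, c^2 - 3*b*d))"

text \<open>A form with a = 0 is divisible by y, hence reducible; for a \<noteq> 0 the form is
  irreducible iff its dehomogenisation a x^3 + b x^2 + c x + d is irreducible in F_q(t)[x].\<close>
definition irred_form :: "'a::field bcf \<Rightarrow> bool" where
  "irred_form f = (case f of (a,b,c,d) \<Rightarrow>
     a \<noteq> 0 \<and> irreducible (map_poly to_fract [:d, c, b, a:]))"

definition is_square :: "'a::field \<Rightarrow> bool" where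
  "is_square x = (\<exists>y. y^2 = x)"

definition imaginary :: "'a::field poly \<Rightarrow> bool" where
  "imaginary \<Delta> = odd (degree \<Delta>)"

definition unusual :: "'a::field poly \<Rightarrow> bool" where
  "unusual \<Delta> = (even (degree \<Delta>) \<and> \<not> is_square (psgn \<Delta>))"

definition Sset :: "'a::{field,finite} \<Rightarrow> 'a set" where
  "Sset h = {h ^ i | i. i \<le> (CARD('a) - 3) div 2}"

definition partially_reduced :: "'a::{field,finite} \<Rightarrow> 'a poly \<times> 'a poly \<times> 'a poly \<Rightarrow> bool" where
  "partially_reduced h F = (case F of (A,B,C) \<Rightarrow>
     pabs B < pabs A \<and> pabs A \<le> pabs C
     \<and> (pabs A < pabs C \<longrightarrow> psgn A \<in> {1, h})
     \<and> (pabs A = pabs C \<longrightarrow> psgn A = 1)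
     \<and> (B \<noteq> 0 \<longrightarrow> psgn B \<in> Sset h))"

text \<open>The set F_s. Degree bounds deg a \<le> s/4 etc. are written as 4 * deg a \<le> s;
  for zero polynomials (degree 0 in Isabelle, -\<infinity> in the paper) these bounds hold in both readings.\<close>
definition Fs :: "'a::{field,finite} \<Rightarrow> nat \<Rightarrow> 'a bcf set" where
  "Fs h s = {(a,b,c,d). irred_form (a,b,c,d)
      \<and> disc (a,b,c,d) \<noteq> 0 \<and> degree (disc (a,b,c,d)) = s
      \<and> 4 * degree a \<le> s \<and> 4 * degree b \<le> s
      \<and> 2 * degree (a*d) \<le> s \<and> 2 * degree (b*c) \<le> s
      \<and> psgn a \<in> Sset h}"

definition Es_set :: "'a::{field,finite} \<Rightarrow> nat \<Rightarrow> 'a bcf set" where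
  "Es_set h s = {f \<in> Fs h s.
      (let \<Delta> = -3 * disc f in
        (imaginary \<Delta> \<or> unusual \<Delta>) \<and> psgn \<Delta> \<in> {1, h})
      \<and> partially_reduced h (hessian f)
      \<and> (case hessian f of (P,Q,R) \<Rightarrow> degree P = degree R)}"

definition Es :: "'a::{field,finite} \<Rightarrow> nat \<Rightarrow> nat" where
  "Es h s = card (Es_set h s)"

end

theory Submission
  imports Defs
begin

lemma hess_id:
  fixes a b c d :: "'a::comm_ring_1"
  shows "(b*c-9*a*d)^2 - 4*(b^2-3*a*c)*(c^2-3*b*d) = -3 * (18*a*b*c*d + b^2*c^2 - 4*a*c^3 - 4*b^3*d - 27*a^2*d^2)"
  by (simp add: algebra_simps power2_eq_square power3_eq_cube)

lemma card_zero_char: "of_nat CARD('a::{finite,comm_ring_1}) = (0::'a)"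
proof -
  have "(\<Sum>x\<in>UNIV. x + 1) = (\<Sum>x\<in>(UNIV::'a set). x)"
    by (rule sum.reindex_bij_witness[where i="\<lambda>x. x - 1" and j="\<lambda>x. x + 1"]) auto
  then show ?thesis by (simp add: sum.distrib)
qed

lemma char23:
  assumes "coprime (CARD('a::{finite,field})) 6"
  shows "(2::'a) \<noteq> 0" "(3::'a) \<noteq> 0"
proof -
  have q0: "of_nat CARD('a) = (0::'a)" by (rule card_zero_char)
  have "odd CARD('a)"
  proof
    assume "even CARD('a)"
    moreover have "(2::nat) dvd 6" by simp
    ultimately have "is_unit (2::nat)" using assms coprime_common_divisor by blast
    then show False by simp
  qed
  then obtain j where j: "CARD('a) = 2*j+1" using oddE by blast
  show "(2::'a) \<noteq> 0"
  proof
    assume "(2::'a) = 0"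
    then have "of_nat (2*j+1) = (1::'a)" by simp
    with q0 j show False by simp
  qed
  have "\<not> 3 dvd CARD('a)"
  proof
    assume "3 dvd CARD('a)"
    moreover have "(3::nat) dvd 6" by simp
    ultimately have "is_unit (3::nat)" using assms coprime_common_divisor by blast
    then show False by simp
  qed
  then have "CARD('a) mod 3 = 1 \<or> CARD('a) mod 3 = 2" by presburger
  moreover have "CARD('a) = 3 * (CARD('a) div 3) + CARD('a) mod 3" by simp
  show "(3::'a) \<noteq> 0"
  proof
    assume 3: "(3::'a) = 0"
    have "(of_nat (CARD('a) mod 3)::'a) = of_nat CARD('a)"
    proof -
      have e: "CARD('a) = 3 * (CARD('a) div 3) + CARD('a) mod 3" by simp
      have "(of_nat CARD('a)::'a) = of_nat (3 * (CARD('a) div 3) + CARD('a) mod 3)" by (metis e)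
      also have "\<dots> = 3 * of_nat (CARD('a) div 3) + of_nat (CARD('a) mod 3)" by (simp only: of_nat_add of_nat_mult of_nat_numeral)
      also have "\<dots> = of_nat (CARD('a) mod 3)" using 3 by simp
      finally show ?thesis by simp
    qed
    with q0 \<open>(2::'a) \<noteq> 0\<close> \<open>CARD('a) mod 3 = 1 \<or> CARD('a) mod 3 = 2\<close> show False by auto
  qed
qed

lemma coeff_prod_top:
  fixes p q :: "'a::comm_ring_1 poly"
  assumes "degree p \<le> k" "degree q \<le> k"
  shows "coeff (p*q) (2*k) = coeff p k * coeff q k"
proof -
  have "coeff (p*q) (2*k) = (\<Sum>i\<le>2*k. coeff p i * coeff q (2*k-i))" by (rule coeff_mult)
  also have "\<dots> = (\<Sum>i\<le>2*k. if i = k then coeff p k * coeff q k else 0)"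
  proof (rule sum.cong)
    fix i assume "i \<in> {..2*k}"
    show "coeff p i * coeff q (2 * k - i) = (if i = k then coeff p k * coeff q k else 0)"
    proof (cases "i = k")
      case True then show ?thesis by (simp add: mult_2)
    next
      case False
      then have "k < i \<or> k < 2*k - i" using \<open>i \<in> {..2*k}\<close> by auto
      then show ?thesis using assms False by (auto simp: coeff_eq_0)
    qed
  qed simp
  also have "\<dots> = coeff p k * coeff q k" by simp
  finally show ?thesis .
qed

lemma deg_diff_right:
  fixes x y :: "'a::ring poly"
  assumes "degree x < degree y \<or> x = 0"
  shows "degree (x - y) = degree y" "lead_coeff (x - y) = - lead_coeff y"
proof -
  have e: "x - y = x + (- y)" by simp
  show "degree (x - y) = degree y"
    using assms by (metis e add.left_neutral degree_add_eq_right degree_minus)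
  show "lead_coeff (x - y) = - lead_coeff y"
    using assms by (metis e add.left_neutral lead_coeff_add_le degree_minus coeff_minus)
qed

lemma deg_diff_left:
  fixes x y :: "'a::ring poly"
  assumes "degree y < degree x \<or> y = 0"
  shows "degree (x - y) = degree x"
proof -
  have e: "x - y = x + (- y)" by simp
  show "degree (x - y) = degree x"
    using assms by (metis e add.right_neutral degree_add_eq_left degree_minus minus_zero)
qed

lemma key:
  fixes h :: "'a::{field,finite}"
  assumes q: "coprime (CARD('a)) 6"
  and f: "(a,b,c,d) \<in> Es_set h s"
  shows "s mod 4 = 0 \<and> a \<noteq> 0 \<and> psgn a \<in> Sset h \<and> degree a \<le> s div 4 \<and> degree b \<le> s div 4
     \<and> degree c \<le> s div 4 \<and> degree d \<le> s div 4
     \<and> coeff b (s div 4) ^ 2 - 3 * coeff a (s div 4) * coeff c (s div 4) = 1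
     \<and> coeff b (s div 4) * coeff c (s div 4) - 9 * coeff a (s div 4) * coeff d (s div 4) = 0
     \<and> -4 * (coeff c (s div 4) ^ 2 - 3 * coeff b (s div 4) * coeff d (s div 4)) = h"
proof -
  have two: "(2::'a) \<noteq> 0" and three: "(3::'a) \<noteq> 0" using char23[OF q] by auto
  have four: "(4::'a) \<noteq> 0" proof -
    have "(4::'a) = 2*2" by simp
    then show ?thesis using two by (metis mult_eq_0_iff)
  qed
  define P where "P = b^2 - 3*a*c"
  define Q where "Q = b*c - 9*a*d"
  define R where "R = c^2 - 3*b*d"
  have H: "hessian (a,b,c,d) = (P,Q,R)" by (simp add: hessian_def P_def Q_def R_def)
  from f have irr: "irred_form (a,b,c,d)" and dd: "degree (disc (a,b,c,d)) = s"
    and da: "4 * degree a \<le> s" and db: "4 * degree b \<le> s"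
    and dad: "2 * degree (a*d) \<le> s" and dbc: "2 * degree (b*c) \<le> s"
    and sa: "psgn a \<in> Sset h"
    and dl: "(imaginary (-3 * disc (a,b,c,d)) \<or> unusual (-3 * disc (a,b,c,d))) \<and> psgn (-3 * disc (a,b,c,d)) \<in> {1, h}"
    and pr: "partially_reduced h (P,Q,R)" and PR: "degree P = degree R"
    by (auto simp: Es_set_def Fs_def H Let_def)
  have a0: "a \<noteq> 0" using irr by (simp add: irred_form_def)
  have q1: "1 < CARD('a)"
  proof -
    have "card {0::'a,1} \<le> CARD('a)" by (rule card_mono) auto
    then show ?thesis by simp
  qed
  from pr have p1: "pabs Q < pabs P" and p2: "pabs P \<le> pabs R" and p3: "pabs P = pabs R \<longrightarrow> psgn P = 1"
    by (auto simp: partially_reduced_def)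
  have P0: "P \<noteq> 0" using p1 by (auto simp: pabs_def)
  have R0: "R \<noteq> 0" using p2 P0 by (auto simp: pabs_def split: if_splits)
  have lP: "lead_coeff P = 1" using p3 P0 R0 PR by (simp add: pabs_def psgn_def)
  have dQ: "degree Q < degree P \<or> Q = 0"
  proof (cases "Q = 0")
    case False
    then have "CARD('a) ^ degree Q < CARD('a) ^ degree P" using p1 P0 by (simp add: pabs_def)
    then show ?thesis using power_less_imp_less_exp[OF q1] by blast
  qed simp
  define m where "m = degree P"
  have Delta: "-3 * disc (a,b,c,d) = Q^2 - 4*P*R"
    unfolding disc_def P_def Q_def R_def using hess_id[of b c a d] by simp
  have d4PR: "degree (4*P*R) = 2*m" "lead_coeff (4*P*R) = 4 * lead_coeff R"
  proof -
    have e: "4*P*R = smult 4 (P*R)" by (simp add: numeral_mult_conv_smult)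
    show "degree (4*P*R) = 2*m" using four P0 R0 PR unfolding e by (simp add: degree_mult_eq m_def)
    have "lead_coeff (P*R) = lead_coeff R" using lP by (simp only: lead_coeff_mult) simp
    then show "lead_coeff (4*P*R) = 4 * lead_coeff R" unfolding e by (simp only: lead_coeff_smult)
  qed
  have dQ2: "degree (Q^2) < degree (4*P*R) \<or> Q^2 = 0"
  proof (cases "Q = 0")
    case False
    then have "degree (Q^2) = 2 * degree Q" by (simp add: degree_power_eq)
    then show ?thesis using dQ False d4PR by (auto simp: m_def)
  qed simp
  have dDelta: "degree (-3 * disc (a,b,c,d)) = 2*m" "lead_coeff (-3 * disc (a,b,c,d)) = - 4 * lead_coeff R"
    unfolding Delta using deg_diff_right[OF dQ2] d4PR by (simp_all only: mult_minus_left)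
  have s2m: "s = 2*m"
  proof -
    have "-3 * disc (a,b,c,d) = smult (-3) (disc (a,b,c,d))"
      by (metis mult_minus_left numeral_mult_conv_smult smult_minus_left)
    then show ?thesis using dDelta three dd by simp
  qed
  have lR: "-4 * lead_coeff R = h"
  proof -
    have "\<not> imaginary (-3 * disc (a,b,c,d))" using dDelta by (simp add: imaginary_def)
    then have "\<not> is_square (psgn (-3 * disc (a,b,c,d)))" using dl by (simp add: unusual_def)
    moreover have "is_square (1::'a)" unfolding is_square_def by (rule exI[of _ 1]) simp
    ultimately have "psgn (-3 * disc (a,b,c,d)) = h" using dl by auto
    then show ?thesis using dDelta by (simp add: psgn_def)
  qed
  have dR: "degree R = m" using PR m_def by simp
  have e3ac: "smult 3 (a*c) = b^2 - P" by (simp add: P_def numeral_mult_conv_smult)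
  have e3bd: "smult 3 (b*d) = c^2 - R" by (simp add: R_def numeral_mult_conv_smult mult.assoc)
  have dsm: "degree (smult 3 x) = degree x" for x :: "'a poly" using three by simp
  have da2: "2 * degree a \<le> m" and db2: "2 * degree b \<le> m" using da db s2m by auto
  have dad2: "degree (a*d) \<le> m" and dbc2: "degree (b*c) \<le> m" using dad dbc s2m by auto
  have dc2: "2 * degree c \<le> m"
  proof (rule ccontr)
    assume "\<not> 2 * degree c \<le> m"
    then have gt: "m < 2 * degree c" by simp
    then have c0: "c \<noteq> 0" by auto
    have "degree (c^2) = 2 * degree c" using c0 by (simp add: degree_power_eq)
    then have "degree (c^2 - R) = 2 * degree c" using deg_diff_left[of R "c^2"] dR gt by simp
    then have dbd: "degree (b*d) = 2 * degree c" using e3bd dsm by metis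
    then have "b*d \<noteq> 0" using gt by auto
    then have b0: "b \<noteq> 0" and d0: "d \<noteq> 0" by auto
    have s1: "degree b + degree d = 2 * degree c" using dbd b0 d0 by (simp add: degree_mult_eq)
    have s2: "degree b + degree c \<le> m" using dbc2 b0 c0 by (simp add: degree_mult_eq)
    have "degree (b^2) = 2 * degree b" using b0 by (simp add: degree_power_eq)
    then have "degree (b^2) < degree P \<or> b^2 = 0" using s2 gt m_def by auto
    then have "degree (b^2 - P) = m" using deg_diff_right(1) m_def by metis
    then have "degree (a*c) = m" using e3ac dsm by metis
    then have s3: "degree a + degree c = m" using a0 c0 by (simp add: degree_mult_eq)
    have s4: "degree a + degree d \<le> m" using dad2 a0 d0 by (simp add: degree_mult_eq)
    from s1 s2 s3 s4 gt show False by linarith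
  qed
  have meven: "even m"
  proof (rule ccontr)
    assume odd: "\<not> even m"
    have "degree (b^2) < degree P \<or> b^2 = 0"
    proof (cases "b = 0")
      case False
      then have "degree (b^2) = 2 * degree b" by (simp add: degree_power_eq)
      then show ?thesis using db2 odd m_def by (metis dvd_triv_left le_neq_implies_less)
    qed simp
    then have "degree (b^2 - P) = m" using deg_diff_right(1) m_def by metis
    then have dac: "degree (a*c) = m" using e3ac dsm by metis
    have "c \<noteq> 0" using dac odd by auto
    then have "degree a + degree c = m" using dac a0 by (simp add: degree_mult_eq)
    with da2 dc2 odd show False by presburger
  qed
  then obtain k where mk: "m = 2*k" by blast
  have sk: "s div 4 = k" "s mod 4 = 0" using s2m mk by auto
  have dak: "degree a \<le> k" and dbk: "degree b \<le> k" and dck: "degree c \<le> k"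
    using da2 db2 dc2 mk by auto
  have ddk: "degree d \<le> k"
  proof (cases "d = 0")
    case d0: False
    show ?thesis
    proof (cases "degree a = k")
      case True
      then show ?thesis using dad2 a0 d0 mk by (simp add: degree_mult_eq)
    next
      case False
      then have lt: "degree a < k" using dak by simp
      have "degree (smult 3 (a*c)) < degree P \<or> smult 3 (a*c) = 0"
      proof (cases "c = 0")
        case False
        then have "degree (a*c) = degree a + degree c" using a0 by (simp add: degree_mult_eq)
        then show ?thesis using lt dck mk m_def dsm by simp
      qed simp
      then have "degree (P + smult 3 (a*c)) = degree P"
        by (metis add.right_neutral degree_add_eq_left)
      moreover have "P + smult 3 (a*c) = b^2" using e3ac by simp
      ultimately have db2k: "degree (b^2) = 2*k" using mk m_def by simp
      then have b0: "b \<noteq> 0" using lt by auto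
      then have dbk': "degree b = k" using db2k by (simp add: degree_power_eq)
      have "degree (c^2 - R) \<le> 2*k"
        by (rule degree_diff_le) (use dck dR mk in \<open>auto simp: degree_power_le[THEN order_trans]\<close>)
      then have "degree (b*d) \<le> 2*k" using e3bd dsm by metis
      then show ?thesis using b0 d0 dbk' by (simp add: degree_mult_eq)
    qed
  qed simp
  have cP: "coeff P (2*k) = 1" using lP mk m_def by simp
  have cQ: "coeff Q (2*k) = 0" using dQ mk m_def by (auto simp: coeff_eq_0)
  have cR: "coeff R (2*k) = lead_coeff R" using dR mk by simp
  have ctop: "coeff (x*y) (2*k) = coeff x k * coeff y k" if "degree x \<le> k" "degree y \<le> k" for x y :: "'a poly"
    using that by (rule coeff_prod_top)
  have E1: "coeff b k ^ 2 - 3 * coeff a k * coeff c k = 1"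
    using cP unfolding P_def
    by (simp add: numeral_mult_conv_smult power2_eq_square ctop dak dbk dck mult.assoc)
  have E2: "coeff b k * coeff c k - 9 * coeff a k * coeff d k = 0"
    using cQ unfolding Q_def
    by (simp add: numeral_mult_conv_smult ctop dak dbk dck ddk mult.assoc)
  have E3: "-4 * (coeff c k ^ 2 - 3 * coeff b k * coeff d k) = h"
    using cR lR unfolding R_def
    by (simp add: numeral_mult_conv_smult power2_eq_square ctop dak dbk dck ddk mult.assoc)
  show ?thesis using sk a0 sa dak dbk dck ddk E1 E2 E3 by simp
qed

definition Lset :: "nat \<Rightarrow> 'a::zero poly set" where
  "Lset k = {p. \<forall>i\<ge>k. coeff p i = 0}"

definition tr :: "nat \<Rightarrow> 'a::comm_ring_1 poly \<Rightarrow> 'a poly" where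
  "tr k p = p - monom (coeff p k) k"

lemma Lset_sub: "Lset k \<subseteq> Poly ` {xs. set xs \<subseteq> UNIV \<and> length xs = k}"
proof
  fix p :: "'a poly" assume p: "p \<in> Lset k"
  have "p = Poly (map (coeff p) [0..<k])"
  proof (rule poly_eqI)
    fix n show "coeff p n = coeff (Poly (map (coeff p) [0..<k])) n"
      using p by (auto simp: Lset_def nth_default_def)
  qed
  then show "p \<in> Poly ` {xs. set xs \<subseteq> UNIV \<and> length xs = k}" by force
qed

lemma Lset_fin: "finite (Lset k :: 'a::{zero,finite} poly set)"
  by (rule finite_subset[OF Lset_sub], rule finite_imageI) (use finite_lists_length_eq[of "UNIV::'a set" k] in simp)

lemma Lset_card: "card (Lset k :: 'a::{zero,finite} poly set) \<le> CARD('a) ^ k"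
proof -
  have "card (Lset k :: 'a poly set) \<le> card (Poly ` {xs::'a list. set xs \<subseteq> UNIV \<and> length xs = k})"
    by (rule card_mono[OF _ Lset_sub], rule finite_imageI) (use finite_lists_length_eq[of "UNIV::'a set" k] in simp)
  also have "\<dots> \<le> card {xs::'a list. set xs \<subseteq> UNIV \<and> length xs = k}" by (rule card_image_le) (use finite_lists_length_eq[of "UNIV::'a set" k] in simp)
  also have "\<dots> = CARD('a) ^ k" by (rule card_lists_length_eq) simp
  finally show ?thesis .
qed

lemma tr_L: "degree p \<le> k \<Longrightarrow> tr k p \<in> Lset k"
  by (auto simp: Lset_def tr_def coeff_monom coeff_eq_0)

lemma tr_decomp: "p = tr k p + monom (coeff p k) k"
  by (simp add: tr_def)

lemma conic_card:
  fixes c :: "'a::{field,finite}"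
  assumes c0: "c \<noteq> 0" and two: "(2::'a) \<noteq> 0"
  shows "card {(A,B). B^2 = 1 + c*A^2} \<le> CARD('a) + 1"
proof -
  let ?X0 = "{(A,B). B^2 = 1 + c*A^2}"
  let ?X1 = "{(A,B). A \<noteq> 0 \<and> B^2 = 1 + c*A^2}"
  have sub: "?X0 \<subseteq> {(0,1),(0,-1)} \<union> ?X1"
  proof
    fix p assume "p \<in> ?X0"
    then obtain A B where p: "p = (A,B)" and e: "B^2 = 1 + c*A^2" by auto
    show "p \<in> {(0,1),(0,-1)} \<union> ?X1"
    proof (cases "A = 0")
      case True
      then have "B^2 = 1^2" using e by simp
      then have "B = 1 \<or> B = -1" using power2_eq_iff by blast
      then show ?thesis using p True by auto
    next
      case False then show ?thesis using p e by simp
    qed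
  qed
  have inj: "inj_on (\<lambda>(A,B). A / (B - 1)) ?X1"
  proof (rule inj_onI, clarify)
    fix A B A' B' :: 'a
    assume e: "A \<noteq> 0" "B^2 = 1 + c*A^2" "A' \<noteq> 0" "B'^2 = 1 + c*A'^2" and t: "A/(B-1) = A'/(B'-1)"
    have key: "B = (c*(A/(B-1))^2 + 1) / (c*(A/(B-1))^2 - 1) \<and> A = (A/(B-1)) * (B - 1)"
      if e1: "A \<noteq> 0" and e2: "B^2 = 1 + c*A^2" for A B :: 'a
    proof -
      have B1: "B - 1 \<noteq> 0"
      proof
        assume "B - 1 = 0" then have "B = 1" by simp
        then have "c*A^2 = 0" using e2 by simp
        then show False using c0 e1 by simp
      qed
      define t where "t = A/(B-1)"
      have At: "A = t*(B-1)" using B1 by (simp add: t_def)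
      have "(B-1)*(B+1) = (B-1)*(c*t^2*(B-1))"
        using e2 At by (simp add: algebra_simps power2_eq_square)
      then have "B+1 = c*t^2*(B-1)" using B1 by simp
      then have eq: "B*(c*t^2 - 1) = c*t^2 + 1" by (simp add: algebra_simps)
      have ne: "c*t^2 - 1 \<noteq> 0"
      proof
        assume "c*t^2 - 1 = 0"
        then have "c*t^2 = 1" by simp
        with eq have "(2::'a) = 0" by simp
        with two show False by simp
      qed
      have Bt: "B = (c*t^2 + 1)/(c*t^2 - 1)" using eq ne by (simp add: field_simps)
      show ?thesis unfolding t_def[symmetric] using Bt At by blast
    qed
    note k1 = key[OF e(1,2)]
    note k2 = key[OF e(3,4), unfolded t[symmetric]]
    have "B = B'" using k1 k2 by (metis (no_types))
    moreover have "A = A'" using k1 k2 \<open>B = B'\<close> by (metis (no_types))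
    ultimately show "A = A' \<and> B = B'" by simp
  qed
  have img: "(\<lambda>(A,B). A / (B - 1)) ` ?X1 \<subseteq> UNIV - {0}"
    using c0 by auto
  have "card ?X1 \<le> card (UNIV - {0::'a})"
    using card_inj_on_le[OF inj img] by simp
  also have "\<dots> = CARD('a) - 1" by (simp add: card_Diff_singleton)
  finally have c1: "card ?X1 \<le> CARD('a) - 1" .
  have "card ?X0 \<le> card ({(0,1),(0,-1)} \<union> ?X1)" by (rule card_mono[OF _ sub]) simp
  also have "\<dots> \<le> card {(0::'a,1::'a),(0,-1)} + card ?X1" by (rule card_Un_le)
  also have "\<dots> \<le> CARD('a) + 1"
  proof -
    have c2: "card {(0::'a,1::'a),(0,-1)} \<le> 2" by (simp add: card_insert_if)
    have "0 < CARD('a)" by simp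
    then show ?thesis using c1 c2 by linarith
  qed
  finally show ?thesis .
qed

lemma ord_ge:
  fixes h :: "'a::{field,finite}"
  assumes gen: "\<forall>x::'a. x \<noteq> 0 \<longrightarrow> (\<exists>i. x = h^i)" and hn: "h^n = 1" and n0: "0 < n"
  shows "CARD('a) - 1 \<le> n"
proof -
  have sub: "UNIV - {0} \<subseteq> (\<lambda>i. h^i) ` {..<n}"
  proof
    fix x :: 'a assume "x \<in> UNIV - {0}"
    then obtain i where xi: "x = h^i" using gen by auto
    have "h^i = h^(n*(i div n) + i mod n)" by simp
    also have "\<dots> = (h^n)^(i div n) * h^(i mod n)" by (simp only: power_add power_mult)
    also have "\<dots> = h^(i mod n)" using hn by simp
    finally have "x = h^(i mod n)" using xi by simp
    moreover have "i mod n < n" using n0 by simp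
    ultimately show "x \<in> (\<lambda>i. h^i) ` {..<n}" by blast
  qed
  have "card (UNIV - {0::'a}) \<le> card ((\<lambda>i. h^i) ` {..<n})" by (rule card_mono[OF _ sub]) simp
  also have "\<dots> \<le> card {..<n}" by (rule card_image_le) simp
  finally show ?thesis by (simp add: card_Diff_singleton)
qed

lemma S_neg:
  fixes h :: "'a::{field,finite}"
  assumes gen: "\<forall>x::'a. x \<noteq> 0 \<longrightarrow> (\<exists>i. x = h^i)" and h0: "h \<noteq> 0" and two: "(2::'a) \<noteq> 0"
    and x: "x \<in> Sset h"
  shows "-x \<notin> Sset h"
proof
  assume "-x \<in> Sset h"
  then obtain j where j: "-x = h^j" "j \<le> (CARD('a) - 3) div 2" by (auto simp: Sset_def)
  obtain i where i: "x = h^i" "i \<le> (CARD('a) - 3) div 2" using x by (auto simp: Sset_def)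
  have hj: "h^j = -(h^i)" using i j by simp
  have hi0: "h^i \<noteq> 0" "h^j \<noteq> 0" using h0 by simp_all
  have "\<exists>e. h^e = -1 \<and> e \<le> (CARD('a) - 3) div 2"
  proof (cases "i \<le> j")
    case True
    have "h^j = h^i * h^(j-i)" using True by (simp add: power_add[symmetric])
    then have "h^i * h^(j-i) = h^i * (-1)" using hj by simp
    then have "h^(j-i) = -1" using hi0(1) by (metis mult_left_cancel)
    then show ?thesis using j by (intro exI[of _ "j-i"]) auto
  next
    case False
    have "h^i = h^j * h^(i-j)" using False by (simp add: power_add[symmetric])
    then have "h^j * h^(i-j) = h^j * (-1)" using hj by simp
    then have "h^(i-j) = -1" using hi0(2) by (metis mult_left_cancel)
    then show ?thesis using i by (intro exI[of _ "i-j"]) auto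
  qed
  then obtain e where e: "h^e = -1" "e \<le> (CARD('a) - 3) div 2" by blast
  have "h^(2*e) = 1"
  proof -
    have "h^(2*e) = (h^e)^2" by (metis mult.commute power_mult)
    then show ?thesis using e by simp
  qed
  show False
  proof (cases "e = 0")
    case True
    then have "(1::'a) = -1" using e by simp
    then have "(2::'a) = 0" by (metis add_eq_0_iff one_add_one)
    then show False using two by simp
  next
    case False
    then have "CARD('a) - 1 \<le> 2*e" using ord_ge[OF gen \<open>h^(2*e) = 1\<close>] by simp
    moreover have "2*e \<le> CARD('a) - 3" using e by linarith
    ultimately show False using False by linarith
  qed
qed

lemma top_uniq:
  fixes A B C D C' D' h :: "'a::field"
  assumes two: "(2::'a) \<noteq> 0" and three: "(3::'a) \<noteq> 0"
    and E1: "B^2 - 3*A*C = 1" and E2: "B*C - 9*A*D = 0" and E3: "-4*(C^2 - 3*B*D) = h"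
  shows "4*C = 3*A*h" "4*B^2 = 4 + 9*h*A^2"
proof -
  show c: "4*C = 3*A*h" using E1 E2 E3 by algebra
  show "4*B^2 = 4 + 9*h*A^2" using E1 c by algebra
qed

lemma top_uniq2:
  fixes A B C D C' D' h :: "'a::field"
  assumes two: "(2::'a) \<noteq> 0" and three: "(3::'a) \<noteq> 0"
    and E1: "B^2 - 3*A*C = 1" and E2: "B*C - 9*A*D = 0" and E3: "-4*(C^2 - 3*B*D) = h"
    and F1: "B^2 - 3*A*C' = 1" and F2: "B*C' - 9*A*D' = 0" and F3: "-4*(C'^2 - 3*B*D') = h"
  shows "C = C' \<and> D = D'"
proof -
  have four: "(4::'a) \<noteq> 0"
  proof -
    have "(4::'a) = 2*2" by simp
    then show ?thesis using two by (metis mult_eq_0_iff)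
  qed
  have "4*C = 4*C'" using top_uniq(1)[OF two three E1 E2 E3] top_uniq(1)[OF two three F1 F2 F3] by simp
  then have CC: "C = C'" using four by simp
  have "D = D'"
  proof (cases "A = 0")
    case False
    have nine: "(9::'a) \<noteq> 0"
    proof -
      have "(9::'a) = 3*3" by simp
      then show ?thesis using three by (metis mult_eq_0_iff)
    qed
    have "9*A*D = 9*A*D'" using E2 F2 CC by (simp add: algebra_simps)
    then show ?thesis using False nine by simp
  next
    case True
    have "4*C = 0" using top_uniq(1)[OF two three E1 E2 E3] True by simp
    then have C0: "C = 0" using four by simp
    have B0: "B \<noteq> 0" using E1 True by auto
    have "12*B*D = h" using E3 C0 by (simp add: algebra_simps)
    moreover have "12*B*D' = h" using F3 C0 CC by (simp add: algebra_simps)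
    ultimately have "(12*B)*D = (12*B)*D'" by simp
    moreover have "(12::'a) \<noteq> 0"
    proof -
      have "(12::'a) = 4*3" by simp
      then show ?thesis using three four by (metis mult_eq_0_iff)
    qed
    ultimately show ?thesis using B0 by simp
  qed
  with CC show ?thesis by simp
qed

theorem mainTheorem15:
  fixes h :: "'a::{field,finite}" and s :: nat
  assumes "coprime (CARD('a)) 6"
    and "h \<noteq> 0" and "\<forall>x::'a. x \<noteq> 0 \<longrightarrow> (\<exists>i. x = h ^ i)"
  shows "(s mod 4 = 0 \<longrightarrow> real (Es h s) \<le> (real CARD('a) + 1) / 2 * real CARD('a) ^ s)
       \<and> (s mod 4 \<noteq> 0 \<longrightarrow> Es h s = 0)"
proof -
  note q = assms(1) and h0 = assms(2) and gen = assms(3)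
  have two: "(2::'a) \<noteq> 0" and three: "(3::'a) \<noteq> 0" using char23[OF q] by auto
  have four: "(4::'a) \<noteq> 0"
  proof -
    have "(4::'a) = 2*2" by simp
    then show ?thesis using two by (metis mult_eq_0_iff)
  qed
  have nine: "(9::'a) \<noteq> 0"
  proof -
    have "(9::'a) = 3*3" by simp
    then show ?thesis using three by (metis mult_eq_0_iff)
  qed
  define E where "E = Es_set h s"
  have K: "s mod 4 = 0 \<and> a \<noteq> 0 \<and> psgn a \<in> Sset h \<and> degree a \<le> s div 4 \<and> degree b \<le> s div 4
     \<and> degree c \<le> s div 4 \<and> degree d \<le> s div 4
     \<and> coeff b (s div 4) ^ 2 - 3 * coeff a (s div 4) * coeff c (s div 4) = 1
     \<and> coeff b (s div 4) * coeff c (s div 4) - 9 * coeff a (s div 4) * coeff d (s div 4) = 0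
     \<and> -4 * (coeff c (s div 4) ^ 2 - 3 * coeff b (s div 4) * coeff d (s div 4)) = h"
    if "(a,b,c,d) \<in> E" for a b c d
    using key[OF q, of a b c d h s] that by (simp add: E_def)
  show ?thesis
  proof (intro conjI impI)
    assume "s mod 4 \<noteq> 0"
    then have "E = {}" using K by auto
    then show "Es h s = 0" by (simp add: Es_def E_def)
  next
    assume s4: "s mod 4 = 0"
    define k where "k = s div 4"
    have sk: "s = 4*k" using s4 k_def by auto
    define L where "L = (Lset k :: 'a poly set)"
    define \<Phi> where "\<Phi> = (\<lambda>(a::'a poly,b::'a poly,c::'a poly,d::'a poly). (a, coeff b k, tr k b, tr k c, tr k d))"
    define V where "V = {(a,B,x,y,z). degree a \<le> k \<and> 4*B^2 = 4 + 9*h*(coeff a k)^2 \<and> x \<in> L \<and> y \<in> L \<and> z \<in> L}"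
    define \<nu> where "\<nu> = (\<lambda>(a::'a poly,B::'a,x::'a poly,y::'a poly,z::'a poly). (-a,B,x,y,z))"
    have injP: "inj_on \<Phi> E"
    proof (rule inj_onI)
      fix f g assume f: "f \<in> E" and g: "g \<in> E" and fg: "\<Phi> f = \<Phi> g"
      obtain a b c d where fe: "f = (a,b,c,d)" by (cases f) auto
      obtain a' b' c' d' where ge: "g = (a',b',c',d')" by (cases g) auto
      note Kf = K[of a b c d, folded k_def] and Kg = K[of a' b' c' d', folded k_def]
      have Kf': "coeff b k ^ 2 - 3 * coeff a k * coeff c k = 1"
        "coeff b k * coeff c k - 9 * coeff a k * coeff d k = 0"
        "-4 * (coeff c k ^ 2 - 3 * coeff b k * coeff d k) = h"
        using Kf f fe by auto
      have Kg': "coeff b' k ^ 2 - 3 * coeff a' k * coeff c' k = 1"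
        "coeff b' k * coeff c' k - 9 * coeff a' k * coeff d' k = 0"
        "-4 * (coeff c' k ^ 2 - 3 * coeff b' k * coeff d' k) = h"
        using Kg g ge by auto
      have eq: "a = a'" "coeff b k = coeff b' k" "tr k b = tr k b'" "tr k c = tr k c'" "tr k d = tr k d'"
        using fg fe ge by (auto simp: \<Phi>_def)
      have Kg2: "coeff b k ^ 2 - 3 * coeff a k * coeff c' k = 1"
        "coeff b k * coeff c' k - 9 * coeff a k * coeff d' k = 0"
        "-4 * (coeff c' k ^ 2 - 3 * coeff b k * coeff d' k) = h"
        using Kg' eq(1,2) by simp_all
      have "coeff c k = coeff c' k \<and> coeff d k = coeff d' k"
        by (rule top_uniq2[OF two three Kf'(1) Kf'(2) Kf'(3) Kg2(1) Kg2(2) Kg2(3)])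
      then have "b = b'" "c = c'" "d = d'" using eq tr_decomp by metis+
      then show "f = g" using fe ge eq by simp
    qed
    have sub: "\<Phi> ` E \<subseteq> V"
    proof
      fix p assume "p \<in> \<Phi> ` E"
      then obtain a b c d where abcd: "(a,b,c,d) \<in> E" and p: "p = \<Phi> (a,b,c,d)" by (metis prod_cases4 imageE)
      note Kf = K[OF abcd, folded k_def]
      have "4*(coeff b k)^2 = 4 + 9*h*(coeff a k)^2"
        using top_uniq(2)[OF two three, of "coeff b k" "coeff a k" "coeff c k" "coeff d k" h] Kf by simp
      then show "p \<in> V" unfolding p using Kf by (simp add: \<Phi>_def V_def L_def tr_L)
    qed
    have subn: "\<nu> ` V \<subseteq> V" by (auto simp: \<nu>_def V_def)
    have disj: "\<Phi> ` E \<inter> \<nu> ` (\<Phi> ` E) = {}"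
    proof (rule ccontr)
      assume "\<Phi> ` E \<inter> \<nu> ` (\<Phi> ` E) \<noteq> {}"
      then obtain f g where f: "f \<in> E" and g: "g \<in> E" and fg: "\<Phi> f = \<nu> (\<Phi> g)" by blast
      obtain a b c d where fe: "f = (a,b,c,d)" by (cases f) auto
      obtain a' b' c' d' where ge: "g = (a',b',c',d')" by (cases g) auto
      have "a = -a'" using fg fe ge by (simp add: \<Phi>_def \<nu>_def)
      moreover have "psgn a \<in> Sset h" "psgn a' \<in> Sset h" using K f g fe ge by blast+
      ultimately show False using S_neg[OF gen h0 two] by (simp add: psgn_def)
    qed
    have injn: "inj \<nu>" by (rule injI) (auto simp: \<nu>_def)
    define c0 where "c0 = 9*h/4"
    define X0 where "X0 = {(A,B). B^2 = 1 + c0*A^2}"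
    have c00: "c0 \<noteq> 0" using h0 nine four by (simp add: c0_def)
    have cX: "card X0 \<le> CARD('a) + 1" unfolding X0_def by (rule conic_card[OF c00 two])
    define G where "G = (\<lambda>((A::'a,B::'a),t::'a poly,x::'a poly,y::'a poly,z::'a poly). (t + monom A k, B, x, y, z))"
    have finL: "finite L" by (simp add: L_def Lset_fin)
    have subV: "V \<subseteq> G ` (X0 \<times> L \<times> L \<times> L \<times> L)"
    proof
      fix p assume "p \<in> V"
      then obtain a B x y z where pe: "p = (a,B,x,y,z)" and "(a,B,x,y,z) \<in> V" by (metis prod_cases5)
      then have v: "degree a \<le> k" "4*B^2 = 4 + 9*h*(coeff a k)^2" "x \<in> L" "y \<in> L" "z \<in> L"
        by (auto simp: V_def)
      have "B^2 = 1 + c0*(coeff a k)^2" using v(2) four by (simp add: c0_def field_simps)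
      then have "((coeff a k, B), tr k a, x, y, z) \<in> X0 \<times> L \<times> L \<times> L \<times> L"
        using v by (simp add: X0_def L_def tr_L)
      moreover have "G ((coeff a k, B), tr k a, x, y, z) = (a,B,x,y,z)"
        using tr_decomp[of a k] by (simp add: G_def)
      ultimately show "p \<in> G ` (X0 \<times> L \<times> L \<times> L \<times> L)" unfolding pe by (metis imageI)
    qed
    have finD: "finite (X0 \<times> L \<times> L \<times> L \<times> L)" using finL by simp
    have finV: "finite V" by (rule finite_subset[OF subV]) (use finD in simp)
    have cL: "card L \<le> CARD('a)^k" by (simp add: L_def Lset_card)
    have "card V \<le> card (G ` (X0 \<times> L \<times> L \<times> L \<times> L))" by (rule card_mono[OF _ subV]) (use finD in simp)
    also have "\<dots> \<le> card (X0 \<times> L \<times> L \<times> L \<times> L)" by (rule card_image_le[OF finD])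
    also have "\<dots> = card X0 * (card L * (card L * (card L * card L)))" by (simp add: card_cartesian_product)
    also have "\<dots> \<le> (CARD('a) + 1) * (CARD('a)^k * (CARD('a)^k * (CARD('a)^k * CARD('a)^k)))"
      by (intro mult_le_mono cX cL)
    also have "\<dots> = (CARD('a) + 1) * CARD('a)^s"
    proof -
      have "k + (k + (k + k)) = s" using sk by simp
      then show ?thesis by (simp add: power_add[symmetric])
    qed
    finally have cV: "card V \<le> (CARD('a) + 1) * CARD('a)^s" .
    have "card (\<Phi> ` E \<union> \<nu> ` (\<Phi> ` E)) \<le> card V"
      by (rule card_mono[OF finV]) (use sub subn in blast)
    moreover have "card (\<Phi> ` E \<union> \<nu> ` (\<Phi> ` E)) = card (\<Phi> ` E) + card (\<nu> ` (\<Phi> ` E))"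
    proof (rule card_Un_disjoint)
      show "finite (\<Phi> ` E)" by (rule finite_subset[OF sub finV])
      show "finite (\<nu> ` \<Phi> ` E)" using finite_subset[OF sub finV] by simp
    qed (rule disj)
    moreover have "card (\<nu> ` (\<Phi> ` E)) = card (\<Phi> ` E)" by (rule card_image) (use injn inj_on_subset in blast)
    moreover have "card (\<Phi> ` E) = card E" by (rule card_image[OF injP])
    ultimately have "2 * card E \<le> (CARD('a) + 1) * CARD('a)^s" using cV by linarith
    then have "real (2 * card E) \<le> real ((CARD('a) + 1) * CARD('a)^s)" by (rule of_nat_mono)
    then have "2 * real (card E) \<le> (real CARD('a) + 1) * real CARD('a) ^ s" by (simp add: algebra_simps)
    then show "real (Es h s) \<le> (real CARD('a) + 1) / 2 * real CARD('a) ^ s"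
      by (simp add: Es_def E_def)
  qed
qed

end
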